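(* Consider an attack graph $G=(V,\mathcal{E})$ with source $v_s$ and a single defender $D_k$ owning assets $V_k\subseteq V\setminus\{v_s\}$ with losses $L_m\in[0,\infty)$, with investment vector $x_k=(x_{i,j})_{(v_i,v_j)\in\mathcal{E}}\in\mathbb{R}^{|\mathcal{E}|}_{\ge0}$. Assume every edge attack success probability function $p_{i,j}:[0,\infty)\to[0,1]$ is log-convex, strictly decreasing, and twice continuously differentiable on $[0,\infty)$, and let $\alpha_k\in(0,1]$. Then the perceived expected cost $$C_k(x_k)=\sum_{v_m\in V_k}L_m\max_{P\in\mathcal{P}_m}\prod_{(v_i,v_j)\in P}\exp\Big[-\big(-\log p_{i,j}(x_{i,j})\big)^{\alpha_k}\Big]$$ is convex in $x_k$.
   Context: An attack graph is a finite directed graph with a designated source node $v_s$; $\mathcal{P}_m$ denotes the (nonempty) set of directed paths from $v_s$ to $v_m$, each path viewed as its set of edges. $p_{i,j}(x_{i,j})$ is the probability that an attack from $v_i$ on $v_j$ succeeds given investment $x_{i,j}$ on that edge; $p\mapsto\exp[-(-\log p)^{\alpha_k}]$ is the Prelec probability weighting function. *)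

theory Defs
  imports "HOL-Analysis.Analysis"
begin

definition is_dpath :: "('v \<times> 'v) set \<Rightarrow> 'v \<Rightarrow> 'v \<Rightarrow> 'v list \<Rightarrow> bool" where
  "is_dpath E s t ws \<longleftrightarrow> ws \<noteq> [] \<and> hd ws = s \<and> last ws = t \<and> distinct ws
     \<and> set (zip ws (tl ws)) \<subseteq> E"

definition dpaths :: "('v \<times> 'v) set \<Rightarrow> 'v \<Rightarrow> 'v \<Rightarrow> ('v \<times> 'v) set set" where
  "dpaths E s t = {set (zip ws (tl ws)) | ws. is_dpath E s t ws}"

definition prelec :: "real \<Rightarrow> real \<Rightarrow> real" where
  "prelec \<alpha> q = exp (- ((- ln q) powr \<alpha>))"

definition log_convex_on :: "real set \<Rightarrow> (real \<Rightarrow> real) \<Rightarrow> bool" where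
  "log_convex_on S f \<longleftrightarrow> (\<forall>x\<in>S. f x > 0) \<and> convex_on S (\<lambda>x. ln (f x))"

definition C2_on :: "real set \<Rightarrow> (real \<Rightarrow> real) \<Rightarrow> bool" where
  "C2_on S f \<longleftrightarrow> (\<exists>f' f''. (\<forall>x\<in>S. (f has_real_derivative f' x) (at x within S)
      \<and> (f' has_real_derivative f'' x) (at x within S)) \<and> continuous_on S f'')"

definition perceived_cost ::
  "('v \<times> 'v) set \<Rightarrow> 'v \<Rightarrow> 'v set \<Rightarrow> ('v \<Rightarrow> real) \<Rightarrow> real
     \<Rightarrow> ('v \<times> 'v \<Rightarrow> real \<Rightarrow> real) \<Rightarrow> ('v \<times> 'v \<Rightarrow> real) \<Rightarrow> real" where
  "perceived_cost E s Vk L \<alpha> p x =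
     (\<Sum>m\<in>Vk. L m * Max ((\<lambda>P. \<Prod>e\<in>P. prelec \<alpha> (p e (x e))) ` dpaths E s m))"

end

theory Submission imports Defs begin

lemma powr_concave_pt:
  fixes a b t \<alpha> :: real
  assumes "0 \<le> a" "0 \<le> b" "0 \<le> t" "t \<le> 1" "0 < \<alpha>" "\<alpha> \<le> 1"
  shows "t * a powr \<alpha> + (1 - t) * b powr \<alpha> \<le> (t * a + (1 - t) * b) powr \<alpha>"
proof (cases "a = 0 \<or> b = 0")
  case True
  have k: "s * c powr \<alpha> \<le> (s * c) powr \<alpha>" if "0 \<le> s" "s \<le> 1" "0 \<le> c" for s c :: real
  proof -
    have "s \<le> s powr \<alpha>"
    proof (cases "s = 0")
      case False
      then have "s powr 1 \<le> s powr \<alpha>" using that assms by (intro powr_mono') auto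
      then show ?thesis using False that by simp
    qed simp
    then have "s * c powr \<alpha> \<le> s powr \<alpha> * c powr \<alpha>" using that by (intro mult_right_mono) auto
    also have "\<dots> = (s * c) powr \<alpha>" using that by (simp add: powr_mult)
    finally show ?thesis .
  qed
  show ?thesis
  proof (cases "a = 0")
    case True
    then show ?thesis using k[of "1 - t" b] assms by simp
  next
    case False
    then have "b = 0" using \<open>a = 0 \<or> b = 0\<close> by simp
    then show ?thesis using k[of t a] assms by simp
  qed
next
  case False
  then have ap: "a > 0" and bp: "b > 0" using assms by auto
  define u where "u = a powr \<alpha>"
  define v where "v = b powr \<alpha>"
  have up: "u > 0" and vp: "v > 0" using ap bp by (auto simp: u_def v_def)
  have ua: "u powr (1/\<alpha>) = a" using ap assms by (simp add: u_def powr_powr)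
  have vb: "v powr (1/\<alpha>) = b" using bp assms by (simp add: v_def powr_powr)
  have cv: "convex_on {0<..} (\<lambda>x. x powr (1/\<alpha>))" using assms by (intro powr_convex) simp
  have "(t * u + (1 - t) * v) powr (1/\<alpha>) \<le> t * u powr (1/\<alpha>) + (1 - t) * v powr (1/\<alpha>)"
    using convex_onD[OF cv, of "1 - t" u v] up vp assms by (simp add: add.commute)
  then have h: "(t * u + (1 - t) * v) powr (1/\<alpha>) \<le> t * a + (1 - t) * b" using ua vb by simp
  have pos: "t * u + (1 - t) * v > 0"
  proof (cases "t = 0")
    case True then show ?thesis using vp by simp
  next
    case False then show ?thesis using up vp assms by (smt (verit) mult_nonneg_nonneg mult_pos_pos)
  qed
  have "t * u + (1 - t) * v = ((t * u + (1 - t) * v) powr (1/\<alpha>)) powr \<alpha>"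
    using pos assms by (simp add: powr_powr)
  also have "\<dots> \<le> (t * a + (1 - t) * b) powr \<alpha>"
    using h assms by (intro powr_mono2) auto
  finally show ?thesis by (simp add: u_def v_def)
qed

lemma edge_conc:
  fixes q :: "real \<Rightarrow> real"
  assumes lc: "log_convex_on {0..} q" and q1: "\<And>w. w \<ge> 0 \<Longrightarrow> q w \<le> 1"
    and "0 \<le> a" "0 \<le> b" "0 \<le> t" "t \<le> 1" "0 < \<alpha>" "\<alpha> \<le> 1"
  shows "t * (- ln (q a)) powr \<alpha> + (1 - t) * (- ln (q b)) powr \<alpha>
         \<le> (- ln (q (t * a + (1 - t) * b))) powr \<alpha>"
proof -
  have pos: "\<And>w. w \<ge> 0 \<Longrightarrow> q w > 0" using lc by (auto simp: log_convex_on_def)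
  have cv: "convex_on {0..} (\<lambda>x. ln (q x))" using lc by (auto simp: log_convex_on_def)
  have "ln (q ((1 - (1 - t)) *\<^sub>R a + (1 - t) *\<^sub>R b)) \<le> (1 - (1 - t)) * ln (q a) + (1 - t) * ln (q b)"
    using convex_onD[OF cv, of "1 - t" a b] assms by simp
  then have h: "t * (- ln (q a)) + (1 - t) * (- ln (q b)) \<le> - ln (q (t * a + (1 - t) * b))"
    by (simp add: algebra_simps)
  have nn: "\<And>w. w \<ge> 0 \<Longrightarrow> - ln (q w) \<ge> 0" using pos q1 by simp
  have "t * (- ln (q a)) powr \<alpha> + (1 - t) * (- ln (q b)) powr \<alpha>
        \<le> (t * (- ln (q a)) + (1 - t) * (- ln (q b))) powr \<alpha>"
    using assms nn by (intro powr_concave_pt) auto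
  also have "\<dots> \<le> (- ln (q (t * a + (1 - t) * b))) powr \<alpha>"
  proof (rule powr_mono2)
    have "t * (- ln (q a)) \<ge> 0" "(1 - t) * (- ln (q b)) \<ge> 0"
      using assms nn[of a] nn[of b] by (intro mult_nonneg_nonneg; simp)+
    then show "0 \<le> t * (- ln (q a)) + (1 - t) * (- ln (q b))" by linarith
  qed (use h assms in auto)
  finally show ?thesis .
qed

lemma path_convex:
  fixes P :: "'e set" and q :: "'e \<Rightarrow> real \<Rightarrow> real"
  assumes "finite P"
    and lc: "\<And>e. e \<in> P \<Longrightarrow> log_convex_on {0..} (q e)"
    and q1: "\<And>e w. e \<in> P \<Longrightarrow> w \<ge> 0 \<Longrightarrow> q e w \<le> 1"
    and x: "\<And>e. e \<in> P \<Longrightarrow> x e \<ge> 0" and y: "\<And>e. e \<in> P \<Longrightarrow> y e \<ge> 0"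
    and "0 \<le> t" "t \<le> 1" "0 < \<alpha>" "\<alpha> \<le> 1"
  shows "(\<Prod>e\<in>P. prelec \<alpha> (q e (t * x e + (1 - t) * y e)))
     \<le> t * (\<Prod>e\<in>P. prelec \<alpha> (q e (x e))) + (1 - t) * (\<Prod>e\<in>P. prelec \<alpha> (q e (y e)))"
proof -
  define G where "G z = (\<Sum>e\<in>P. (- ln (q e (z e))) powr \<alpha>)" for z
  have pr: "(\<Prod>e\<in>P. prelec \<alpha> (q e (z e))) = exp (- G z)" for z
    using assms(1) by (simp add: prelec_def G_def exp_sum flip: sum_negf)
  have "t * G x + (1 - t) * G y \<le> G (\<lambda>e. t * x e + (1 - t) * y e)"
    unfolding G_def sum_distrib_left sum.distrib[symmetric]
    using edge_conc[OF lc q1] x y assms by (intro sum_mono) auto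
  then have "exp (- G (\<lambda>e. t * x e + (1 - t) * y e)) \<le> exp ((1 - t) * (- G y) + t * (- G x))"
    by (simp add: algebra_simps)
  also have "\<dots> = exp ((1 - t) *\<^sub>R (- G y) + t *\<^sub>R (- G x))" by simp
  also have "\<dots> \<le> (1 - t) * exp (- G y) + t * exp (- G x)"
    using convex_onD[OF exp_convex, of t "- G y" "- G x"] assms by simp
  finally show ?thesis unfolding pr by simp
qed

lemma dpaths_sub: "P \<in> dpaths E s m \<Longrightarrow> P \<subseteq> E"
  by (auto simp: dpaths_def is_dpath_def)

theorem lemma2:
  fixes V :: "'v set" and E :: "('v \<times> 'v) set" and vs :: 'v and Vk :: "'v set"
    and L :: "'v \<Rightarrow> real" and p :: "'v \<times> 'v \<Rightarrow> real \<Rightarrow> real" and \<alpha> :: real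
  assumes "finite V" and "E \<subseteq> V \<times> V" and "vs \<in> V"
    and "Vk \<subseteq> V - {vs}"
    and "\<And>m. m \<in> Vk \<Longrightarrow> dpaths E vs m \<noteq> {}"
    and "\<And>m. m \<in> Vk \<Longrightarrow> L m \<ge> 0"
    and "\<And>e y. e \<in> E \<Longrightarrow> y \<ge> 0 \<Longrightarrow> p e y \<in> {0..1}"
    and "\<And>e. e \<in> E \<Longrightarrow> log_convex_on {0..} (p e)"
    and "\<And>e. e \<in> E \<Longrightarrow> strict_antimono_on {0..} (p e)"
    and "\<And>e. e \<in> E \<Longrightarrow> C2_on {0..} (p e)"
    and "0 < \<alpha>" and "\<alpha> \<le> 1"
  shows "\<And>x y t. (\<forall>e\<in>E. x e \<ge> 0) \<Longrightarrow> (\<forall>e\<in>E. y e \<ge> 0)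
           \<Longrightarrow> (\<forall>e. e \<notin> E \<longrightarrow> x e = 0) \<Longrightarrow> (\<forall>e. e \<notin> E \<longrightarrow> y e = 0)
           \<Longrightarrow> 0 \<le> t \<Longrightarrow> t \<le> 1 \<Longrightarrow>
           perceived_cost E vs Vk L \<alpha> p (\<lambda>e. t * x e + (1 - t) * y e)
             \<le> t * perceived_cost E vs Vk L \<alpha> p x + (1 - t) * perceived_cost E vs Vk L \<alpha> p y"
proof -
  fix x y :: "'v \<times> 'v \<Rightarrow> real" and t :: real
  assume x: "\<forall>e\<in>E. x e \<ge> 0" and y: "\<forall>e\<in>E. y e \<ge> 0" and t0: "0 \<le> t" and t1: "t \<le> 1"
  define z where "z = (\<lambda>e. t * x e + (1 - t) * y e)"
  define F where "F w P = (\<Prod>e\<in>P. prelec \<alpha> (p e (w e)))" for w P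
  have finE: "finite E" using finite_subset[OF assms(2)] assms(1) by simp
  have key: "Max (F z ` dpaths E vs m) \<le> t * Max (F x ` dpaths E vs m) + (1 - t) * Max (F y ` dpaths E vs m)"
    if m: "m \<in> Vk" for m
  proof -
    let ?D = "dpaths E vs m"
    have sub: "?D \<subseteq> Pow E"
    proof (rule subsetI)
      fix P assume "P \<in> ?D"
      then have "P \<subseteq> E" by (rule dpaths_sub)
      then show "P \<in> Pow E" by (rule PowI)
    qed
    have finD: "finite ?D" using finite_subset[OF sub] finE by simp
    have ne: "?D \<noteq> {}" using assms(5) m by blast
    have "Max (F z ` ?D) \<in> F z ` ?D" using finD ne by (intro Max_in) auto
    then obtain P0 where P0: "P0 \<in> ?D" "Max (F z ` ?D) = F z P0" by (rule imageE) simp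
    have P0E: "P0 \<subseteq> E" using P0 sub by blast
    have finP0: "finite P0" using finite_subset[OF P0E] finE by simp
    have "F z P0 \<le> t * F x P0 + (1 - t) * F y P0"
      unfolding F_def z_def
    proof (rule path_convex[OF finP0])
      show "\<And>e. e \<in> P0 \<Longrightarrow> log_convex_on {0..} (p e)" using assms(8) P0E by blast
      show "\<And>e w. e \<in> P0 \<Longrightarrow> 0 \<le> w \<Longrightarrow> p e w \<le> 1" using assms(7) P0E by (meson atLeastAtMost_iff subsetD)
      show "\<And>e. e \<in> P0 \<Longrightarrow> 0 \<le> x e" using x P0E by blast
      show "\<And>e. e \<in> P0 \<Longrightarrow> 0 \<le> y e" using y P0E by blast
          show "0 \<le> t" by (rule t0)
      show "t \<le> 1" by (rule t1)
      show "0 < \<alpha>" by (rule assms(11))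
      show "\<alpha> \<le> 1" by (rule assms(12))
    qed
    also have "\<dots> \<le> t * Max (F x ` ?D) + (1 - t) * Max (F y ` ?D)"
    proof -
      have a: "F x P0 \<le> Max (F x ` ?D)" using finD P0(1) by (intro Max_ge) auto
      have b: "F y P0 \<le> Max (F y ` ?D)" using finD P0(1) by (intro Max_ge) auto
      show ?thesis using mult_left_mono[OF a t0] mult_left_mono[OF b, of "1 - t"] t1 by linarith
    qed
    finally show ?thesis using P0 by simp
  qed
  have "perceived_cost E vs Vk L \<alpha> p z = (\<Sum>m\<in>Vk. L m * Max (F z ` dpaths E vs m))"
    unfolding perceived_cost_def F_def ..
  also have "\<dots> \<le> (\<Sum>m\<in>Vk. L m * (t * Max (F x ` dpaths E vs m) + (1 - t) * Max (F y ` dpaths E vs m)))"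
      proof (rule sum_mono)
    fix m assume "m \<in> Vk"
    then show "L m * Max (F z ` dpaths E vs m) \<le> L m * (t * Max (F x ` dpaths E vs m) + (1 - t) * Max (F y ` dpaths E vs m))"
      using key[of m] assms(6)[of m] by (rule_tac mult_left_mono) auto
  qed
  also have "\<dots> = t * (\<Sum>m\<in>Vk. L m * Max (F x ` dpaths E vs m)) + (1 - t) * (\<Sum>m\<in>Vk. L m * Max (F y ` dpaths E vs m))"
  proof -
    have "\<And>m. L m * (t * Max (F x ` dpaths E vs m) + (1 - t) * Max (F y ` dpaths E vs m))
      = t * (L m * Max (F x ` dpaths E vs m)) + (1 - t) * (L m * Max (F y ` dpaths E vs m))"
      by (simp add: algebra_simps)
    then show ?thesis by (simp only: sum.distrib sum_distrib_left)
  qed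
  also have "\<dots> = t * perceived_cost E vs Vk L \<alpha> p x + (1 - t) * perceived_cost E vs Vk L \<alpha> p y"
    unfolding perceived_cost_def F_def ..
  finally show "perceived_cost E vs Vk L \<alpha> p (\<lambda>e. t * x e + (1 - t) * y e)
             \<le> t * perceived_cost E vs Vk L \<alpha> p x + (1 - t) * perceived_cost E vs Vk L \<alpha> p y"
    unfolding z_def .
qed

end
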